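(* Let $\mathbf w\in\mathbb R^m$. (a) If $|\lambda|=2$, then $B_{\mathbf w}$ satisfies the strong majority criterion if and only if $\mathbf w(1)>\mathbf w(2)$. (b) If $|\lambda|>2$, then no nontrivial positional voting method $B_{\mathbf w}$ satisfies the strong majority criterion.
   Context: Fix an integer $n\ge 2$ and a set $\mathbf C$ of $n$ candidates. Fix a composition $\lambda=(\lambda_1,\dots,\lambda_m)$ of $n$ (positive integers with $\sum_i\lambda_i=n$), write $|\lambda|=m$ and $[m]=\{1,\dots,m\}$. A ballot is a function $b:\mathbf C\to[m]$ with $|b^{-1}(i)|=\lambda_i$ for every $i$; $\mathbf C_\lambda$ denotes the set of ballots. The profile space is $P=\mathbb R^{\mathbf C_\lambda}$ with basis $\{\delta_b\}$ (indicator functions) and inner product $\mathbf p\cdot\mathbf q=\sum_b\mathbf p(b)\mathbf q(b)$. For candidates $X,Y$: $\mathbf a_{X>Y}=\sum_{b:\,b(X)<b(Y)}\delta_b$ and $\mathbf r_{X>Y}=\mathbf a_{X>Y}-\mathbf a_{Y>X}$; by convention, $X$ defeats $Y$ in a head-to-head race in $\mathbf p$ iff $\mathbf p\cdot\mathbf r_{X>Y}>0$. For $\mathbf w\in\mathbb R^m$ (a function $[m]\to\mathbb R$) and $X\in\mathbf C$, $\mathbf v_X\in P$ is $\mathbf v_X(b)=\mathbf w(b(X))$; the positional voting method $B_{\mathbf w}:P\to\mathbb R^{\mathbf C}$ is $B_{\mathbf w}(\mathbf p)(X)=\mathbf p\cdot\mathbf v_X$. A map $F:P\to\mathbb R^{\mathbf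 C}$ is trivial if $F(\mathbf p)$ is a constant function on $\mathbf C$ for every $\mathbf p$, and nontrivial otherwise. $F$ satisfies the strong majority criterion if for every ordered pair of distinct candidates $X,Y$ and every $\mathbf p\in P$ with $\mathbf p\cdot\mathbf r_{X>Y}>0$, we have $F(\mathbf p)(X)>F(\mathbf p)(Y)$. *)

theory Defs
  imports Complex_Main
begin

(* Composition lambda = (lambda_1,...,lambda_m): a list lam, lambda_i = lam ! (i-1), m = length lam.
   Profiles: functions (('c => nat) => real); only values on ballots matter. *)

definition ballots :: "nat list \<Rightarrow> ('c::finite \<Rightarrow> nat) set" where
  "ballots lam = {b. (\<forall>X. b X \<in> {1..length lam}) \<and>
                     (\<forall>i\<in>{1..length lam}. card {X. b X = i} = lam ! (i - 1))}"

definition ip :: "nat list \<Rightarrow> (('c::finite \<Rightarrow> nat) \<Rightarrow> real) \<Rightarrow> (('c \<Rightarrow> nat) \<Rightarrow> real) \<Rightarrow> real" where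
  "ip lam p q = (\<Sum>b\<in>ballots lam. p b * q b)"

definition a_vec :: "'c \<Rightarrow> 'c \<Rightarrow> ('c \<Rightarrow> nat) \<Rightarrow> real" where
  "a_vec X Y = (\<lambda>b. if b X < b Y then 1 else 0)"

definition r_vec :: "'c \<Rightarrow> 'c \<Rightarrow> ('c \<Rightarrow> nat) \<Rightarrow> real" where
  "r_vec X Y = (\<lambda>b. a_vec X Y b - a_vec Y X b)"

definition v_vec :: "(nat \<Rightarrow> real) \<Rightarrow> 'c \<Rightarrow> ('c \<Rightarrow> nat) \<Rightarrow> real" where
  "v_vec w X = (\<lambda>b. w (b X))"

definition positional :: "nat list \<Rightarrow> (nat \<Rightarrow> real) \<Rightarrow> (('c::finite \<Rightarrow> nat) \<Rightarrow> real) \<Rightarrow> 'c \<Rightarrow> real" where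
  "positional lam w p X = ip lam p (v_vec w X)"

definition trivial_method :: "((('c \<Rightarrow> nat) \<Rightarrow> real) \<Rightarrow> 'c \<Rightarrow> real) \<Rightarrow> bool" where
  "trivial_method F \<longleftrightarrow> (\<forall>p. \<exists>c. \<forall>X. F p X = c)"

definition strong_majority :: "nat list \<Rightarrow> ((('c::finite \<Rightarrow> nat) \<Rightarrow> real) \<Rightarrow> 'c \<Rightarrow> real) \<Rightarrow> bool" where
  "strong_majority lam F \<longleftrightarrow>
     (\<forall>X Y p. X \<noteq> Y \<longrightarrow> ip lam p (r_vec X Y) > 0 \<longrightarrow> F p X > F p Y)"

end

theory Submission
  imports Defs "HOL-Library.FuncSet"
begin

lemma finite_ballots: "finite (ballots lam :: ('c::finite \<Rightarrow> nat) set)"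
proof -
  have "ballots lam \<subseteq> (Pi\<^sub>E (UNIV::'c set) (\<lambda>_. {1..length lam}))"
    unfolding ballots_def by (auto simp: PiE_def Pi_def)
  moreover have "finite (Pi\<^sub>E (UNIV::'c set) (\<lambda>_. {1..length lam}))"
    by (rule finite_PiE) auto
  ultimately show ?thesis by (rule finite_subset)
qed

lemma ip_delta:
  assumes "b \<in> ballots lam"
  shows "ip lam (\<lambda>c. if c = b then 1 else 0) q = q (b::'c::finite \<Rightarrow> nat)"
proof -
  have "ip lam (\<lambda>c. if c = b then 1 else 0) q = (\<Sum>c\<in>ballots lam. if c = b then q c else 0)"
    unfolding ip_def by (rule sum.cong) auto
  also have "\<dots> = q b" using assms finite_ballots[of lam] by (subst sum.delta) auto
  finally show ?thesis .
qed

lemma ip3: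
  assumes "b1 \<in> ballots lam" "b2 \<in> ballots lam" "b3 \<in> ballots lam"
  shows "ip lam (\<lambda>c. (if c = b1 then 1 else 0) + (if c = b2 then 1 else 0) - (if c = b3 then 1 else 0)) q
      = q b1 + q b2 - q (b3::'c::finite \<Rightarrow> nat)"
proof -
  have "ip lam (\<lambda>c. (if c = b1 then 1 else 0) + (if c = b2 then 1 else 0) - (if c = b3 then 1 else 0)) q
     = ip lam (\<lambda>c. if c = b1 then 1 else 0) q + ip lam (\<lambda>c. if c = b2 then 1 else 0) q
       - ip lam (\<lambda>c. if c = b3 then 1 else 0) q"
    unfolding ip_def by (simp add: algebra_simps sum.distrib sum_subtractf)
  then show ?thesis using ip_delta[OF assms(1)] ip_delta[OF assms(2)] ip_delta[OF assms(3)] by simp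
qed

lemma ballot_exists:
  fixes X Y :: "'c::finite"
  assumes pos: "\<forall>i\<in>set lam. i > 0" and sm: "sum_list lam = card (UNIV::'c set)"
    and XY: "X \<noteq> Y" and i: "i \<in> {1..length lam}" and j: "j \<in> {1..length lam}" and ij: "i \<noteq> j"
  shows "\<exists>b\<in>ballots lam. b X = i \<and> b Y = j"
proof -
  define S where "S = Sigma {1..length lam} (\<lambda>k. {..<lam!(k-1)})"
  have "card S = (\<Sum>k\<in>{1..length lam}. lam!(k-1))"
    unfolding S_def by (simp add: card_SigmaI)
  also have "\<dots> = (\<Sum>k<length lam. lam!k)"
    by (simp add: sum.atLeast1_atMost_eq)
  also have "\<dots> = card (UNIV::'c set)" using sm by (simp add: sum_list_sum_nth atLeast0LessThan)
  finally have cardS: "card S = card (UNIV::'c set)" .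
  have finS: "finite S" unfolding S_def by auto
  have lpos: "lam!(k-1) > 0" if "k \<in> {1..length lam}" for k
    using pos that by (auto intro!: nth_mem bspec[OF pos])
  have inS: "(i,0) \<in> S" "(j,0) \<in> S" using lpos[OF i] lpos[OF j] i j unfolding S_def by auto
  have c1: "card (S - {(i,0),(j,0)}) = card S - 2" using inS ij finS by (simp add: card_Diff_subset)
  have c2: "card (UNIV - {X,Y}) = card (UNIV::'c set) - 2" using XY by (simp add: card_Diff_subset)
  obtain g where g: "bij_betw g (UNIV - {X,Y}) (S - {(i,0),(j,0)})"
    using finite_same_card_bij[of "UNIV - {X,Y}" "S - {(i,0),(j,0)}"] c1 c2 cardS finS by auto
  define f where "f Z = (if Z = X then (i,0) else if Z = Y then (j,0) else g Z)" for Z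
  have b1: "bij_betw f (UNIV - {X,Y}) (S - {(i,0),(j,0)})"
    using g by (rule bij_betw_cong[THEN iffD1, rotated]) (auto simp: f_def)
  have b2: "bij_betw f {X,Y} {(i,0),(j,0)}"
    using XY ij by (auto simp: bij_betw_def f_def inj_on_def)
  have "bij_betw f ((UNIV - {X,Y}) \<union> {X,Y}) ((S - {(i,0),(j,0)}) \<union> {(i,0),(j,0)})"
    by (rule bij_betw_combine[OF b1 b2]) auto
  moreover have "(UNIV - {X,Y}) \<union> {X,Y} = UNIV" by auto
  moreover have "(S - {(i,0),(j,0)}) \<union> {(i,0),(j,0)} = S" using inS by auto
  ultimately have fb: "bij_betw f UNIV S" by simp
  define b where "b Z = fst (f Z)" for Z
  have fS: "f Z \<in> S" for Z using fb by (auto simp: bij_betw_def)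
  have "b \<in> ballots lam"
    unfolding ballots_def
  proof (intro CollectI conjI allI ballI)
    fix Z show "b Z \<in> {1..length lam}" using fS[of Z] unfolding b_def S_def by auto
  next
    fix k assume k: "k \<in> {1..length lam}"
    have "bij_betw f {Z. b Z = k} {s\<in>S. fst s = k}"
      by (rule bij_betw_subset[OF fb]) (use fb in \<open>auto simp: b_def bij_betw_def\<close>)
    then have "card {Z. b Z = k} = card {s\<in>S. fst s = k}" by (rule bij_betw_same_card)
    also have "{s\<in>S. fst s = k} = {k} \<times> {..<lam!(k-1)}" using k unfolding S_def by auto
    finally show "card {Z. b Z = k} = lam ! (k - 1)" by (simp add: card_cartesian_product)
  qed
  moreover have "b X = i" "b Y = j" using XY by (auto simp: b_def f_def)
  ultimately show ?thesis by blast
qed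

theorem mainTheorem10:
  fixes lam :: "nat list" and w :: "nat \<Rightarrow> real"
  assumes "card (UNIV :: 'c::finite set) \<ge> 2"
    and "\<forall>i\<in>set lam. i > 0"
    and "sum_list lam = card (UNIV :: 'c set)"
  shows "(length lam = 2 \<longrightarrow>
            (strong_majority lam (positional lam w :: (('c \<Rightarrow> nat) \<Rightarrow> real) \<Rightarrow> 'c \<Rightarrow> real)
               \<longleftrightarrow> w 1 > w 2))
       \<and> (length lam > 2 \<longrightarrow>
            \<not> trivial_method (positional lam w :: (('c \<Rightarrow> nat) \<Rightarrow> real) \<Rightarrow> 'c \<Rightarrow> real) \<longrightarrow>
            \<not> strong_majority lam (positional lam w :: (('c \<Rightarrow> nat) \<Rightarrow> real) \<Rightarrow> 'c \<Rightarrow> real))"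
proof -
  have "\<exists>X Y::'c. X \<noteq> Y"
  proof (rule ccontr)
    assume "\<not> (\<exists>X Y::'c. X \<noteq> Y)"
    then have "card (UNIV::'c set) \<le> Suc 0" by (subst card_le_Suc0_iff_eq) auto
    with assms(1) show False by simp
  qed
  then obtain X Y :: 'c where XY: "X \<noteq> Y" by blast
  have A: "length lam = 2 \<longrightarrow>
            (strong_majority lam (positional lam w :: (('c \<Rightarrow> nat) \<Rightarrow> real) \<Rightarrow> 'c \<Rightarrow> real)
               \<longleftrightarrow> w 1 > w 2)"
  proof
    assume L: "length lam = 2"
    have key: "positional lam w p X' - positional lam w p Y' = (w 1 - w 2) * ip lam p (r_vec X' Y')"
      for p and X' Y' :: 'c
    proof -
      have "positional lam w p X' - positional lam w p Y'
          = (\<Sum>b\<in>ballots lam. p b * (w (b X') - w (b Y')))"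
        unfolding positional_def ip_def v_vec_def by (simp add: sum_subtractf algebra_simps)
      also have "\<dots> = (\<Sum>b\<in>ballots lam. (w 1 - w 2) * (p b * r_vec X' Y' b))"
      proof (rule sum.cong[OF refl])
        fix b :: "'c \<Rightarrow> nat" assume "b \<in> ballots lam"
        then have "b X' \<in> {1,2}" "b Y' \<in> {1,2}" using L unfolding ballots_def
          by (auto, metis le_antisym not_less_eq_eq numeral_2_eq_2)+
        then show "p b * (w (b X') - w (b Y')) = (w 1 - w 2) * (p b * r_vec X' Y' b)"
          unfolding r_vec_def a_vec_def by (auto simp: algebra_simps)
      qed
      also have "\<dots> = (w 1 - w 2) * ip lam p (r_vec X' Y')"
        unfolding ip_def by (simp add: sum_distrib_left)
      finally show ?thesis .
    qed
    show "strong_majority lam (positional lam w :: (('c \<Rightarrow> nat) \<Rightarrow> real) \<Rightarrow> 'c \<Rightarrow> real)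
               \<longleftrightarrow> w 1 > w 2"
    proof
      assume sm: "strong_majority lam (positional lam w :: (('c \<Rightarrow> nat) \<Rightarrow> real) \<Rightarrow> 'c \<Rightarrow> real)"
      obtain b where b: "b \<in> ballots lam" "b X = 1" "b Y = 2"
        using ballot_exists[OF assms(2) assms(3) XY, of 1 2] L by auto
      define p where "p = (\<lambda>c. if c = b then 1 else (0::real))"
      have "ip lam p (r_vec X Y) = 1" unfolding p_def using ip_delta[OF b(1)] b
        by (simp add: r_vec_def a_vec_def)
      then have "positional lam w p X > positional lam w p Y" using sm XY
        unfolding strong_majority_def by auto
      then show "w 1 > w 2" using key[of p X Y] \<open>ip lam p (r_vec X Y) = 1\<close> by simp
    next
      assume "w 1 > w 2"
      then show "strong_majority lam (positional lam w :: (('c \<Rightarrow> nat) \<Rightarrow> real) \<Rightarrow> 'c \<Rightarrow> real)"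
        unfolding strong_majority_def using key
        by (metis diff_gt_0_iff_gt mult_pos_pos)
    qed
  qed
  have B: "length lam > 2 \<longrightarrow>
            \<not> strong_majority lam (positional lam w :: (('c \<Rightarrow> nat) \<Rightarrow> real) \<Rightarrow> 'c \<Rightarrow> real)"
  proof
    assume L: "length lam > 2"
    obtain b1 where b1: "b1 \<in> ballots lam" "b1 X = 1" "b1 Y = 2"
      using ballot_exists[OF assms(2) assms(3) XY, of 1 2] L by auto
    obtain b2 where b2: "b2 \<in> ballots lam" "b2 X = 2" "b2 Y = 3"
      using ballot_exists[OF assms(2) assms(3) XY, of 2 3] L by auto
    obtain b3 where b3: "b3 \<in> ballots lam" "b3 X = 1" "b3 Y = 3"
      using ballot_exists[OF assms(2) assms(3) XY, of 1 3] L by auto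
    define p where "p = (\<lambda>c. (if c = b1 then 1 else 0) + (if c = b2 then 1 else 0) - (if c = b3 then 1 else (0::real)))"
    have g: "ip lam p (r_vec X Y) = 1" unfolding p_def using ip3[OF b1(1) b2(1) b3(1)] b1 b2 b3
      by (simp add: r_vec_def a_vec_def)
    have "positional lam w p X = w 1 + w 2 - w 1" "positional lam w p Y = w 2 + w 3 - w 3"
      unfolding positional_def p_def using ip3[OF b1(1) b2(1) b3(1)] b1 b2 b3
      by (simp_all add: v_vec_def)
    then have "\<not> positional lam w p X > positional lam w p Y" by simp
    then show "\<not> strong_majority lam (positional lam w :: (('c \<Rightarrow> nat) \<Rightarrow> real) \<Rightarrow> 'c \<Rightarrow> real)"
      using g XY unfolding strong_majority_def by (metis zero_less_one)
  qed
  show ?thesis using A B by blast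
qed

end
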